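(* Let $N$ be a simply connected $2$-step nilpotent Lie group with Lie algebra $\mathfrak n$ and a left-invariant pseudo-Riemannian metric $\langle\cdot,\cdot\rangle$ whose center $\mathfrak z$ is nondegenerate, and suppose $(N,\langle\cdot,\cdot\rangle)$ is of pseudo$H$-type. Then $(N,\langle\cdot,\cdot\rangle)$ has a nontrivial nilsoliton, i.e. there exist $c\in\mathbb R$ and a derivation $D$ of $\mathfrak n$ with $\mathrm{Ric}=c\cdot\mathrm{Id}+D$.
   Context: For $y\in\mathfrak n$ define $J_y:\mathfrak n\to\mathfrak n$ by $\langle J_y x,w\rangle=\langle y,[x,w]\rangle$ for all $x,w\in\mathfrak n$. With nondegenerate center $\mathfrak z$ put $\mathfrak v=\mathfrak z^{\perp}$, so $\mathfrak n=\mathfrak z\oplus\mathfrak v$ and $J_z$ preserves $\mathfrak v$ for $z\in\mathfrak z$. The group is of pseudo$H$-type if $J_z^2=\langle z,z\rangle I$ on $\mathfrak v$ for all $z\in\mathfrak z$. $\mathrm{Ric}$ denotes the Ricci operator of the left-invariant metric, i.e. the endomorphism of $\mathfrak n$ with $\langle \mathrm{Ric}\,x,y\rangle=\varrho(x,y)$, $\varrho$ the Ricci tensor. A left-invariant metric is an algebraic Ricci soliton (on a nilpotent group: a nilsoliton) if $\mathrm{Ric}=c\cdot\mathrm{Id}+D$ for some $c\in\mathbb R$ and some derivation $D$ of $\mathfrak n$ (i.e. $D[X,Y]=[DX,Y]+[X,DY]$). The paper uses "nontrivial" without further definition; here $N$ is non-abelian. *)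

theory Defs
  imports "HOL-Analysis.Analysis"
begin

text \<open>A finite-dimensional real Lie algebra n = real^'n with bracket br and a
 left-invariant pseudo-Riemannian metric, i.e. a symmetric nondegenerate bilinear form g.\<close>

definition lie_bracket :: "(real^'n \<Rightarrow> real^'n \<Rightarrow> real^'n) \<Rightarrow> bool" where
  "lie_bracket br \<longleftrightarrow> bilinear br \<and> (\<forall>x. br x x = 0) \<and>
     (\<forall>x y w. br x (br y w) + br y (br w x) + br w (br x y) = 0)"

definition two_step_nilpotent :: "(real^'n \<Rightarrow> real^'n \<Rightarrow> real^'n) \<Rightarrow> bool" where
  "two_step_nilpotent br \<longleftrightarrow> (\<forall>x y w. br (br x y) w = 0) \<and> (\<exists>x y. br x y \<noteq> 0)"

definition pseudo_metric :: "(real^'n \<Rightarrow> real^'n \<Rightarrow> real) \<Rightarrow> bool" where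
  "pseudo_metric g \<longleftrightarrow> bilinear g \<and> (\<forall>x y. g x y = g y x) \<and>
     (\<forall>x. (\<forall>y. g x y = 0) \<longrightarrow> x = 0)"

definition center :: "(real^'n \<Rightarrow> real^'n \<Rightarrow> real^'n) \<Rightarrow> (real^'n) set" where
  "center br = {x. \<forall>y. br x y = 0}"

definition nondegenerate_on :: "(real^'n \<Rightarrow> real^'n \<Rightarrow> real) \<Rightarrow> (real^'n) set \<Rightarrow> bool" where
  "nondegenerate_on g S \<longleftrightarrow> (\<forall>x\<in>S. (\<forall>y\<in>S. g x y = 0) \<longrightarrow> x = 0)"

definition orth_compl :: "(real^'n \<Rightarrow> real^'n \<Rightarrow> real) \<Rightarrow> (real^'n) set \<Rightarrow> (real^'n) set" where
  "orth_compl g S = {x. \<forall>z\<in>S. g x z = 0}"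

definition Jmap :: "(real^'n \<Rightarrow> real^'n \<Rightarrow> real^'n) \<Rightarrow> (real^'n \<Rightarrow> real^'n \<Rightarrow> real)
    \<Rightarrow> real^'n \<Rightarrow> real^'n \<Rightarrow> real^'n" where
  "Jmap br g y x = (THE u. \<forall>w. g u w = g y (br x w))"

definition pseudoH_type :: "(real^'n \<Rightarrow> real^'n \<Rightarrow> real^'n) \<Rightarrow> (real^'n \<Rightarrow> real^'n \<Rightarrow> real) \<Rightarrow> bool" where
  "pseudoH_type br g \<longleftrightarrow>
     (\<forall>z\<in>center br. \<forall>v\<in>orth_compl g (center br).
        Jmap br g z (Jmap br g z v) = g z z *\<^sub>R v)"

text \<open>Levi-Civita connection on left-invariant fields (Koszul formula):
  2 g (\<nabla>_x y) w = g [x,y] w - g [y,w] x + g [w,x] y.\<close>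
definition LC :: "(real^'n \<Rightarrow> real^'n \<Rightarrow> real^'n) \<Rightarrow> (real^'n \<Rightarrow> real^'n \<Rightarrow> real)
    \<Rightarrow> real^'n \<Rightarrow> real^'n \<Rightarrow> real^'n" where
  "LC br g x y = (THE u. \<forall>w. g u w = (g (br x y) w - g (br y w) x + g (br w x) y) / 2)"

definition curv :: "(real^'n \<Rightarrow> real^'n \<Rightarrow> real^'n) \<Rightarrow> (real^'n \<Rightarrow> real^'n \<Rightarrow> real)
    \<Rightarrow> real^'n \<Rightarrow> real^'n \<Rightarrow> real^'n \<Rightarrow> real^'n" where
  "curv br g x y w = LC br g x (LC br g y w) - LC br g y (LC br g x w) - LC br g (br x y) w"

definition ricci_tensor :: "(real^'n \<Rightarrow> real^'n \<Rightarrow> real^'n) \<Rightarrow> (real^'n \<Rightarrow> real^'n \<Rightarrow> real)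
    \<Rightarrow> real^'n \<Rightarrow> real^'n \<Rightarrow> real" where
  "ricci_tensor br g y w = trace (matrix (\<lambda>x. curv br g x y w))"

definition ricci_op :: "(real^'n \<Rightarrow> real^'n \<Rightarrow> real^'n) \<Rightarrow> (real^'n \<Rightarrow> real^'n \<Rightarrow> real)
    \<Rightarrow> real^'n \<Rightarrow> real^'n" where
  "ricci_op br g x = (THE u. \<forall>y. g u y = ricci_tensor br g x y)"

definition derivation :: "(real^'n \<Rightarrow> real^'n \<Rightarrow> real^'n) \<Rightarrow> (real^'n \<Rightarrow> real^'n) \<Rightarrow> bool" where
  "derivation br D \<longleftrightarrow> linear D \<and> (\<forall>x y. D (br x y) = br (D x) y + br x (D y))"

end

theory Submission
  imports Defs "HOL-Analysis.Analysis"
begin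



lemma lin_expand:
  fixes f :: "real^'n \<Rightarrow> 'b::real_vector"
  assumes "linear f"
  shows "f w = (\<Sum>i\<in>UNIV. (w$i) *\<^sub>R f (axis i 1))"
proof -
  have "f w = f (\<Sum>i\<in>UNIV. (w$i) *\<^sub>R axis i 1)"
    using basis_expansion[of w] by (simp add: scalar_mult_eq_scaleR)
  also have "\<dots> = (\<Sum>i\<in>UNIV. (w$i) *\<^sub>R f (axis i 1))"
    using assms by (simp add: linear_sum linear_scale)
  finally show ?thesis .
qed

definition TR :: "(real^'n \<Rightarrow> real^'n) \<Rightarrow> real" where
  "TR f = trace (matrix f)"

lemma TR_alt: "TR f = (\<Sum>i\<in>UNIV. f (axis i 1) $ i)"
  by (simp add: TR_def trace_def matrix_def)

lemma TR_add: "TR (\<lambda>x. f x + h x) = TR f + TR h"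
  by (simp add: TR_alt sum.distrib)
lemma TR_diff: "TR (\<lambda>x. f x - h x) = TR f - TR h"
  by (simp add: TR_alt sum_subtractf)
lemma TR_scale: "TR (\<lambda>x. c *\<^sub>R f x) = c * TR f"
  by (simp add: TR_alt sum_distrib_left)
lemma TR_zero: "TR (\<lambda>x. 0) = 0"
  by (simp add: TR_alt)
lemma TR_cyc:
  assumes "linear A" "linear B"
  shows "TR (\<lambda>x. A (B x)) = TR (\<lambda>x. B (A x))"
proof -
  have "TR (\<lambda>x. A (B x)) = trace (matrix A ** matrix B)"
    using matrix_compose[OF assms(2) assms(1)] by (simp add: TR_def o_def)
  also have "\<dots> = trace (matrix B ** matrix A)" by (rule trace_mul_sym)
  also have "\<dots> = TR (\<lambda>x. B (A x))"
    using matrix_compose[OF assms(1) assms(2)] by (simp add: TR_def o_def)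
  finally show ?thesis .
qed

lemma TR_zero_lemma:
  fixes f A B :: "real^'n \<Rightarrow> real^'n"
  assumes "linear f" "linear A" "linear B" "\<And>x. f x = A (f (B x))" "\<And>x. B (A x) = 0"
  shows "TR f = 0"
proof -
  have lfB: "linear (\<lambda>x. f (B x))" using linear_compose[OF assms(3) assms(1)] by (simp add: o_def)
  have "f = (\<lambda>x. A (f (B x)))" by (rule ext, rule assms(4))
  then have "TR f = TR (\<lambda>x. A (f (B x)))" by (rule arg_cong)
  also have "\<dots> = TR (\<lambda>x. f (B (A x)))" using TR_cyc[OF assms(2) lfB] by simp
  also have "\<dots> = TR (\<lambda>x::real^'n. 0)" using assms(5) linear_0[OF assms(1)] by simp
  finally show ?thesis by (simp add: TR_zero)
qed




locale ctx =
  fixes br :: "real^'n \<Rightarrow> real^'n \<Rightarrow> real^'n"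
    and g :: "real^'n \<Rightarrow> real^'n \<Rightarrow> real"
  assumes lb: "lie_bracket br"
    and tn: "two_step_nilpotent br"
    and pm: "pseudo_metric g"
    and nd: "nondegenerate_on g (center br)"
    and ph: "pseudoH_type br g"
begin

abbreviation "Z \<equiv> center br"
abbreviation "V \<equiv> orth_compl g (center br)"
abbreviation "J \<equiv> Jmap br g"

lemma blbr: "bilinear br" using lb by (simp add: lie_bracket_def)
lemma blg: "bilinear g" using pm by (simp add: pseudo_metric_def)
lemma gsym: "g x y = g y x" using pm by (simp add: pseudo_metric_def)
lemma gnd: "(\<And>y. g x y = 0) \<Longrightarrow> x = 0" using pm by (simp add: pseudo_metric_def)

lemma br_alt: "br x x = 0" using lb by (simp add: lie_bracket_def)

lemmas br_simps = bilinear_ladd[OF blbr] bilinear_radd[OF blbr] bilinear_lmul[OF blbr]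
  bilinear_rmul[OF blbr] bilinear_lneg[OF blbr] bilinear_rneg[OF blbr] bilinear_lzero[OF blbr]
  bilinear_rzero[OF blbr] bilinear_lsub[OF blbr] bilinear_rsub[OF blbr]
lemmas g_simps = bilinear_ladd[OF blg] bilinear_radd[OF blg] bilinear_lmul[OF blg]
  bilinear_rmul[OF blg] bilinear_lneg[OF blg] bilinear_rneg[OF blg] bilinear_lzero[OF blg]
  bilinear_rzero[OF blg] bilinear_lsub[OF blg] bilinear_rsub[OF blg]

lemma br_anti: "br y x = - br x y"
proof -
  have "br (x+y) (x+y) = br x y + br y x"
    using br_alt[of x] br_alt[of y] by (simp add: br_simps)
  then have "br x y + br y x = 0" using br_alt[of "x+y"] by simp
  then show ?thesis by (metis add_eq_0_iff2 add.commute)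
qed

lemma br_Z: "br x y \<in> Z" using tn by (simp add: two_step_nilpotent_def center_def)
lemma Z_br: "z \<in> Z \<Longrightarrow> br z y = 0" by (simp add: center_def)
lemma Z_br2: "z \<in> Z \<Longrightarrow> br y z = 0" by (metis Z_br br_anti neg_equal_0_iff_equal)
lemma V_g: "v \<in> V \<Longrightarrow> z \<in> Z \<Longrightarrow> g v z = 0" by (simp add: orth_compl_def)
lemma V_g2: "v \<in> V \<Longrightarrow> z \<in> Z \<Longrightarrow> g z v = 0" using V_g gsym by metis

lemma g_eq: "(\<And>w. g u w = g u' w) \<Longrightarrow> u = u'"
  using gnd[of "u - u'"] by (simp add: g_simps)

lemma lin_g: "linear (g u)" using blg by (simp add: bilinear_def)
lemma lin_g1: "linear (\<lambda>u. g u w)" using blg by (simp add: bilinear_def)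
lemma lin_br: "linear (br u)" using blbr by (simp add: bilinear_def)
lemma lin_br1: "linear (\<lambda>u. br u w)" using blbr by (simp add: bilinear_def)

lemma riesz:
  assumes "linear \<phi>"
  shows "\<exists>!u. \<forall>w. g u w = \<phi> w"
proof -
  define R where "R u = (\<chi> i. g u (axis i 1))" for u :: "real^'n"
  have lR: "linear R" unfolding R_def
    by (rule linearI) (auto simp: vec_eq_iff g_simps)
  have iR: "inj R"
  proof (rule injI)
    fix u u' assume "R u = R u'"
    then have h: "\<And>i. g u (axis i 1) = g u' (axis i 1)" by (simp add: R_def vec_eq_iff)
    show "u = u'"
    proof (rule g_eq)
      fix w
      show "g u w = g u' w"
        using lin_expand[OF lin_g, of u w] lin_expand[OF lin_g, of u' w] h by simp
    qed
  qed
  have "surj R" using linear_injective_imp_surjective[OF lR iR] by simp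
  then obtain u where u: "R u = (\<chi> i. \<phi> (axis i 1))" by (metis surj_def)
  have ex: "\<forall>w. g u w = \<phi> w"
  proof
    fix w
    have "g u w = (\<Sum>i\<in>UNIV. (w$i) *\<^sub>R g u (axis i 1))" using lin_expand[OF lin_g] .
    also have "\<dots> = (\<Sum>i\<in>UNIV. (w$i) *\<^sub>R \<phi> (axis i 1))"
      using u by (simp add: R_def vec_eq_iff)
    also have "\<dots> = \<phi> w" by (rule lin_expand[OF assms, symmetric])
    finally show "g u w = \<phi> w" .
  qed
  show ?thesis using ex g_eq by metis
qed

lemma J_char: "g (J y x) w = g y (br x w)"
proof -
  have "linear (\<lambda>w. g y (br x w))"
    using linear_compose[OF lin_br lin_g] by (simp add: o_def)
  from theI'[OF riesz[OF this]] show ?thesis by (simp add: Jmap_def)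
qed

lemma J_lin1: "linear (\<lambda>a. J a b)"
  by (rule linearI; rule g_eq; simp add: J_char g_simps)
lemma J_lin2: "linear (J a)"
  by (rule linearI; rule g_eq; simp add: J_char g_simps br_simps)

lemmas J_simps = linear_add[OF J_lin1] linear_add[OF J_lin2] linear_diff[OF J_lin1]
  linear_diff[OF J_lin2] linear_scale[OF J_lin1] linear_scale[OF J_lin2]
  linear_0[OF J_lin1] linear_0[OF J_lin2] linear_neg[OF J_lin1] linear_neg[OF J_lin2]

lemma J_skew: "g (J a b) c = - g b (J a c)"
  by (simp add: J_char gsym[of b] br_anti[of c] g_simps)

lemma LC_eq: "LC br g x y = (1/2) *\<^sub>R (br x y - J x y - J y x)"
proof -
  have P0: "\<forall>w. g ((1/2) *\<^sub>R (br x y - J x y - J y x)) w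
     = (g (br x y) w - g (br y w) x + g (br w x) y) / 2"
  proof
    fix w
    have 1: "g (J x y) w = g (br y w) x" using J_char[of x y w] gsym[of x "br y w"] by simp
    have 2: "g (J y x) w = - g (br w x) y"
      using J_char[of y x w] gsym[of y "br w x"] br_anti[of w x] by (simp add: g_simps)
    show "g ((1/2) *\<^sub>R (br x y - J x y - J y x)) w
     = (g (br x y) w - g (br y w) x + g (br w x) y) / 2"
      by (simp add: g_simps 1 2)
  qed
  have U: "\<exists>!u. \<forall>w. g u w = (g (br x y) w - g (br y w) x + g (br w x) y) / 2"
    by (rule riesz, rule linearI) (simp_all add: g_simps br_simps algebra_simps diff_divide_distrib add_divide_distrib)
  have T0: "\<forall>w. g (THE u. \<forall>w. g u w = (g (br x y) w - g (br y w) x + g (br w x) y) / 2) w = (g (br x y) w - g (br y w) x + g (br w x) y) / 2"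
    by (rule theI'[OF U])
  have T: "(THE u. \<forall>w. g u w = (g (br x y) w - g (br y w) x + g (br w x) y) / 2) = (1/2) *\<^sub>R (br x y - J x y - J y x)"
    apply (rule g_eq)
    subgoal for w using spec[OF T0, of w] spec[OF P0, of w] by simp
    done
  show ?thesis by (simp only: LC_def T)
qed

end


context ctx begin

lemma subZ: "subspace Z"
  unfolding subspace_def center_def by (simp add: br_simps)
lemma subV: "subspace V"
  unfolding subspace_def orth_compl_def by (simp add: g_simps)
lemma ZV0: "x \<in> Z \<Longrightarrow> x \<in> V \<Longrightarrow> x = 0"
  using nd unfolding nondegenerate_on_def orth_compl_def by blast

lemma sumUNIV: "{x + y |x y. x \<in> Z \<and> y \<in> V} = UNIV"
proof -
  define A where "A u = (\<chi> i. g u (axis i 1))" for u :: "real^'n"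
  have gA: "g u w = A u \<bullet> w" for u w
    using lin_expand[OF lin_g, of u w] by (simp add: A_def inner_vec_def mult.commute)
  have lA: "linear A" unfolding A_def
    by (rule linearI) (auto simp: vec_eq_iff g_simps)
  have iA: "inj A"
  proof (rule injI)
    fix u u' assume "A u = A u'"
    then show "u = u'" by (intro g_eq) (simp add: gA)
  qed
  have sA: "surj A" using linear_injective_imp_surjective[OF lA iA] by simp
  define W where "W = {y \<in> UNIV. \<forall>x\<in>Z. orthogonal x y}"
  have dW: "dim W + dim Z = dim (UNIV :: (real^'n) set)"
    unfolding W_def by (rule dim_subspace_orthogonal_to_vectors[OF subZ subspace_UNIV]) simp
  have AV: "A ` V = W"
  proof
    show "A ` V \<subseteq> W"
    proof
      fix y assume "y \<in> A ` V"
      then obtain v where v: "v \<in> V" "y = A v" by blast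
      have "x \<bullet> y = 0" if "x \<in> Z" for x
        using V_g[OF v(1) that] gA[of v x] v(2) by (simp add: inner_commute)
      then show "y \<in> W" by (simp add: W_def orthogonal_def)
    qed
    show "W \<subseteq> A ` V"
    proof
      fix y assume y: "y \<in> W"
      obtain v where v: "y = A v" using sA by (metis surj_def)
      have "v \<in> V" using y v by (auto simp: W_def orthogonal_def orth_compl_def inner_commute gA)
      then show "y \<in> A ` V" using v by blast
    qed
  qed
  have dV: "dim V = dim W"
    using dim_image_eq[OF lA, of V] iA AV by (simp add: inj_on_def inj_def)
  have I0: "Z \<inter> V = {0}" using ZV0 subZ subV by (auto simp: subspace_0)
  have "dim {x + y |x y. x \<in> Z \<and> y \<in> V} + dim (Z \<inter> V) = dim Z + dim V"
    by (rule dim_sums_Int[OF subZ subV])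
  then have "dim {x + y |x y. x \<in> Z \<and> y \<in> V} = dim (UNIV :: (real^'n) set)"
    using dW dV I0 by simp
  then have "span {x + y |x y. x \<in> Z \<and> y \<in> V} = UNIV"
  proof -
    assume h: "dim {x + y |x y. x \<in> Z \<and> y \<in> V} = dim (UNIV :: (real^'n) set)"
    have "dim {x + y |x y. x \<in> Z \<and> y \<in> V} = DIM(real^'n)" using h by (simp only: dim_UNIV)
    then show ?thesis using dim_eq_full by blast
  qed
  moreover have "subspace {x + y |x y. x \<in> Z \<and> y \<in> V}"
    using subspace_sums[OF subZ subV] by (simp add: set_plus_def)
  then have "span {x + y |x y. x \<in> Z \<and> y \<in> V} = {x + y |x y. x \<in> Z \<and> y \<in> V}"
    by (simp only: span_eq_iff)
  ultimately show ?thesis by simp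
qed

end


context ctx begin

definition Pz where "Pz x = (SOME z. z \<in> Z \<and> x - z \<in> V)"
definition Qv where "Qv x = x - Pz x"

lemma decomp_ex: "\<exists>z. z \<in> Z \<and> x - z \<in> V"
proof -
  have "x \<in> {x + y |x y. x \<in> Z \<and> y \<in> V}" using sumUNIV by simp
  then obtain a b where "x = a + b" "a \<in> Z" "b \<in> V" by blast
  then show ?thesis by (intro exI[of _ a]) simp
qed

lemma P_Z: "Pz x \<in> Z" and P_V: "x - Pz x \<in> V"
  using someI_ex[OF decomp_ex[of x]] by (auto simp: Pz_def)

lemma Q_V: "Qv x \<in> V" using P_V by (simp add: Qv_def)

lemma P_uniq: assumes "z \<in> Z" "x - z \<in> V" shows "Pz x = z"
proof -
  have "Pz x - z \<in> Z" using P_Z assms(1) subZ by (simp add: subspace_diff)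
  moreover have "Pz x - z = (x - z) - (x - Pz x)" by simp
  then have "Pz x - z \<in> V" using P_V assms(2) subV by (metis subspace_diff)
  ultimately have "Pz x - z = 0" using ZV0 by blast
  then show ?thesis by simp
qed

lemma P_lin: "linear Pz"
proof (rule linearI)
  fix x y
  show "Pz (x + y) = Pz x + Pz y"
  proof (rule P_uniq)
    show "Pz x + Pz y \<in> Z" using P_Z subZ by (simp add: subspace_add)
    have "x + y - (Pz x + Pz y) = (x - Pz x) + (y - Pz y)" by simp
    then show "x + y - (Pz x + Pz y) \<in> V" using P_V subV by (metis subspace_add)
  qed
next
  fix c :: real and x
  show "Pz (c *\<^sub>R x) = c *\<^sub>R Pz x"
  proof (rule P_uniq)
    show "c *\<^sub>R Pz x \<in> Z" using P_Z subZ by (simp add: subspace_scale)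
    have "c *\<^sub>R x - c *\<^sub>R Pz x = c *\<^sub>R (x - Pz x)" by (simp add: algebra_simps)
    then show "c *\<^sub>R x - c *\<^sub>R Pz x \<in> V" using P_V subV by (metis subspace_scale)
  qed
qed

lemma Q_lin: "linear Qv"
  unfolding Qv_def using linear_compose_sub[OF linear_id P_lin] by (simp add: id_def)

lemma P_onZ: "z \<in> Z \<Longrightarrow> Pz z = z"
  by (rule P_uniq) (auto simp: subspace_0[OF subV])
lemma P_onV: "v \<in> V \<Longrightarrow> Pz v = 0"
  by (rule P_uniq) (auto simp: subspace_0[OF subZ])
lemma PQ: "Pz (Qv x) = 0" using P_onV Q_V by simp
lemma QP: "Qv (Pz x) = 0" using P_onZ P_Z by (simp add: Qv_def)
lemma PQsum: "Pz x + Qv x = x" by (simp add: Qv_def)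

lemma gPQ: "g (Pz a) (Qv b) = 0" using V_g2[OF Q_V P_Z] .
lemma gQP: "g (Qv a) (Pz b) = 0" using V_g[OF Q_V P_Z] .
lemma gQ1: "g (Qv a) b = g (Qv a) (Qv b)"
proof -
  have "g (Qv a) b = g (Qv a) (Pz b + Qv b)" by (simp add: PQsum)
  then show ?thesis by (simp add: g_simps gQP)
qed
lemma gQ2: "g a (Qv b) = g (Qv a) (Qv b)"
proof -
  have "g a (Qv b) = g (Pz a + Qv a) (Qv b)" by (simp add: PQsum)
  then show ?thesis by (simp add: g_simps gPQ)
qed
lemma gP1: "g (Pz a) b = g (Pz a) (Pz b)"
proof -
  have "g (Pz a) b = g (Pz a) (Pz b + Qv b)" by (simp add: PQsum)
  then show ?thesis by (simp add: g_simps gPQ)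
qed

lemma J_Z2: "z \<in> Z \<Longrightarrow> J a z = 0"
  by (rule g_eq) (simp add: J_char Z_br g_simps)
lemma J_V1: "v \<in> V \<Longrightarrow> J v b = 0"
  by (rule g_eq) (simp add: J_char V_g br_Z g_simps)
lemma J_in_V: "J a b \<in> V"
  by (simp add: orth_compl_def J_char Z_br2 g_simps)
lemma J_P1: "J a b = J (Pz a) b"
proof -
  have "J a b = J (Pz a + Qv a) b" by (simp add: PQsum)
  also have "\<dots> = J (Pz a) b" by (simp add: J_simps J_V1[OF Q_V])
  finally show ?thesis .
qed
lemma J_Q2: "J a b = J a (Qv b)"
  by (simp add: Qv_def J_simps J_Z2[OF P_Z])
lemma Q_J: "Qv (J a b) = J a b" by (simp add: Qv_def P_onV J_in_V)
lemma P_br: "Pz (br a b) = br a b" by (simp add: P_onZ br_Z)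

lemma polar: assumes "a \<in> Z" "b \<in> Z" "v \<in> V"
  shows "J a (J b v) + J b (J a v) = (2 * g a b) *\<^sub>R v"
proof -
  have ab: "a + b \<in> Z" using assms subZ by (simp add: subspace_add)
  have h: "\<And>c. c \<in> Z \<Longrightarrow> J c (J c v) = g c c *\<^sub>R v"
    using ph assms(3) by (simp add: pseudoH_type_def)
  have "J (a+b) (J (a+b) v) = J a (J a v) + J b (J b v) + (J a (J b v) + J b (J a v))"
    by (simp add: J_simps algebra_simps)
  moreover have "J (a+b) (J (a+b) v) = (g a a + g b b + 2 * g a b) *\<^sub>R v"
    using h[OF ab] by (simp add: g_simps gsym[of b a] algebra_simps)
  ultimately show ?thesis using h[OF assms(1)] h[OF assms(2)]
    by (simp add: algebra_simps)
qed

lemma polar_gen: "J a (J b v) + J b (J a v) = (2 * g (Pz a) (Pz b)) *\<^sub>R Qv v"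
proof -
  have "J a (J b v) = J (Pz a) (J (Pz b) (Qv v))"
    using J_P1[of a "J b v"] J_P1[of b v] J_Q2[of "Pz b" v] by simp
  moreover have "J b (J a v) = J (Pz b) (J (Pz a) (Qv v))"
    using J_P1[of b "J a v"] J_P1[of a v] J_Q2[of "Pz a" v] by simp
  ultimately show ?thesis using polar[OF P_Z P_Z Q_V] by simp
qed

end


context ctx begin

definition Ed where "Ed i = (THE u. \<forall>w. g u w = w $ i)"

lemma Ed_char: "g (Ed i) w = w $ i"
proof -
  have "linear (\<lambda>w::real^'n. w $ i)" by (rule linearI) simp_all
  from theI'[OF riesz[OF this]] show ?thesis by (simp add: Ed_def)
qed

lemma Ed_sym: "Ed j $ i = Ed i $ j"
  using Ed_char[of i "Ed j"] Ed_char[of j "Ed i"] gsym[of "Ed i" "Ed j"] by simp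

lemma TR_g: "TR f = (\<Sum>i\<in>UNIV. g (Ed i) (f (axis i 1)))"
  by (simp add: TR_alt Ed_char)

lemma TR_neg: "TR (\<lambda>x. - f x) = - TR f"
  by (simp add: TR_alt sum_negf)

lemma swap:
  fixes B :: "real^'n \<Rightarrow> real^'n \<Rightarrow> 'v::real_vector"
  assumes l1: "\<And>b. linear (\<lambda>a. B a b)" and l2: "\<And>a. linear (B a)"
  shows "(\<Sum>i\<in>UNIV. B (Ed i) (axis i 1)) = (\<Sum>i\<in>UNIV. B (axis i 1) (Ed i))"
proof -
  have L: "B (Ed i) (axis i 1) = (\<Sum>j\<in>UNIV. (Ed i $ j) *\<^sub>R B (axis j 1) (axis i 1))" for i
    using lin_expand[OF l1[of "axis i 1"], of "Ed i"] by simp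
  have R: "B (axis i 1) (Ed i) = (\<Sum>j\<in>UNIV. (Ed i $ j) *\<^sub>R B (axis i 1) (axis j 1))" for i
    using lin_expand[OF l2[of "axis i 1"], of "Ed i"] by simp
  have "(\<Sum>i\<in>UNIV. B (axis i 1) (Ed i))
      = (\<Sum>i\<in>UNIV. \<Sum>j\<in>UNIV. (Ed i $ j) *\<^sub>R B (axis i 1) (axis j 1))" using R by simp
  also have "\<dots> = (\<Sum>j\<in>UNIV. \<Sum>i\<in>UNIV. (Ed i $ j) *\<^sub>R B (axis i 1) (axis j 1))"
    by (rule sum.swap)
  also have "\<dots> = (\<Sum>j\<in>UNIV. \<Sum>i\<in>UNIV. (Ed j $ i) *\<^sub>R B (axis i 1) (axis j 1))"
    using Ed_sym by simp
  also have "\<dots> = (\<Sum>i\<in>UNIV. B (Ed i) (axis i 1))" using L by simp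
  finally show ?thesis by simp
qed

lemma TR_skew:
  assumes lf: "linear f" and sk: "\<And>a b. g (f a) b = - g a (f b)"
  shows "TR f = 0"
proof -
  have l1: "linear (\<lambda>a. g (f a) b)" for b
    using linear_compose[OF lf lin_g1[of b]] by (simp add: o_def)
  have "TR f = (\<Sum>i\<in>UNIV. - g (f (Ed i)) (axis i 1))"
    unfolding TR_g using sk by simp
  also have "\<dots> = - (\<Sum>i\<in>UNIV. g (f (Ed i)) (axis i 1))" by (simp add: sum_negf)
  also have "(\<Sum>i\<in>UNIV. g (f (Ed i)) (axis i 1)) = (\<Sum>i\<in>UNIV. g (f (axis i 1)) (Ed i))"
    by (rule swap[OF l1 lin_g])
  also have "\<dots> = TR f" unfolding TR_g using gsym by (intro sum.cong) auto
  finally show ?thesis by simp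
qed

definition Kop where "Kop w = (\<Sum>i\<in>UNIV. J (Ed i) (J (axis i 1) w))"
definition mu where "mu = (\<Sum>i\<in>UNIV. g (Pz (Ed i)) (Pz (axis i 1)))"

lemma K_eq: "Kop w = mu *\<^sub>R Qv w"
proof -
  have l2: "linear (\<lambda>b. J a (J b w))" for a
    using linear_compose[OF J_lin1 J_lin2] by (simp add: o_def)
  have s: "Kop w = (\<Sum>i\<in>UNIV. J (axis i 1) (J (Ed i) w))"
    unfolding Kop_def by (rule swap[OF J_lin1 l2])
  have "Kop w + Kop w = (\<Sum>i\<in>UNIV. J (Ed i) (J (axis i 1) w) + J (axis i 1) (J (Ed i) w))"
    by (subst s) (simp add: Kop_def sum.distrib)
  also have "\<dots> = (\<Sum>i\<in>UNIV. (2 * g (Pz (Ed i)) (Pz (axis i 1))) *\<^sub>R Qv w)"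
    using polar_gen by simp
  also have "\<dots> = (2 * mu) *\<^sub>R Qv w"
    by (simp add: mu_def scaleR_sum_left sum_distrib_left)
  finally have "2 *\<^sub>R Kop w = (2 * mu) *\<^sub>R Qv w" by (simp add: scaleR_2)
  then have "(1/2::real) *\<^sub>R (2 *\<^sub>R Kop w) = (1/2::real) *\<^sub>R ((2 * mu) *\<^sub>R Qv w)" by simp
  then show ?thesis by simp
qed

lemma g_sum1: "g (sum f S) y = (\<Sum>i\<in>S. g (f i) y)"
  using linear_sum[OF lin_g1[of y]] by (simp add: o_def)
lemma g_sum2: "g y (sum f S) = (\<Sum>i\<in>S. g y (f i))"
  using linear_sum[OF lin_g[of y]] by (simp add: o_def)

lemma T1: "TR (\<lambda>x. br x u) = 0"
proof (rule TR_zero_lemma[OF lin_br1 P_lin Q_lin])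
  fix x
  have "br (Qv x) u = br x u" by (simp add: Qv_def br_simps Z_br[OF P_Z])
  then show "br x u = Pz (br (Qv x) u)" by (simp add: P_br)
  show "Qv (Pz x) = 0" by (rule QP)
qed

lemma T2: "TR (\<lambda>x. J x u) = 0"
proof (rule TR_zero_lemma[OF J_lin1 Q_lin P_lin])
  fix x
  show "J x u = Qv (J (Pz x) u)" by (simp add: Q_J J_P1[of x u])
  show "Pz (Qv x) = 0" by (rule PQ)
qed

lemma T3: "TR (J u) = 0"
  by (rule TR_skew[OF J_lin2 J_skew])

lemma TLC: "TR (\<lambda>x. LC br g x u) = 0"
proof -
  have "TR (\<lambda>x. LC br g x u) = TR (\<lambda>x. (1/2) *\<^sub>R (br x u - J x u - J u x))"
    by (simp add: LC_eq)
  also have "\<dots> = (1/2) * (TR (\<lambda>x. br x u) - TR (\<lambda>x. J x u) - TR (J u))"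
    by (simp add: TR_scale TR_diff)
  finally show ?thesis by (simp add: T1 T2 T3)
qed

lemma T4: "TR (\<lambda>x. J (br x y) w) = mu * g (Qv w) y"
proof -
  have "TR (\<lambda>x. J (br x y) w) = TR (\<lambda>c. br (J c w) y)"
    using TR_cyc[OF J_lin1[of w] lin_br1[of y]] by simp
  also have "\<dots> = (\<Sum>i\<in>UNIV. g (J (Ed i) (J (axis i 1) w)) y)"
    unfolding TR_g by (simp add: J_char)
  also have "\<dots> = g (Kop w) y" by (simp add: Kop_def g_sum1)
  also have "\<dots> = mu * g (Qv w) y" by (simp add: K_eq g_simps)
  finally show ?thesis .
qed

lemma T5: "TR (\<lambda>x. br y (J x w)) = - (mu * g y (Qv w))"
proof -
  have "TR (\<lambda>x. br y (J x w)) = (\<Sum>i\<in>UNIV. g (J (Ed i) y) (J (axis i 1) w))"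
    unfolding TR_g by (simp add: J_char)
  also have "\<dots> = (\<Sum>i\<in>UNIV. - g y (J (Ed i) (J (axis i 1) w)))"
    using J_skew by simp
  also have "\<dots> = - g y (Kop w)" by (simp add: Kop_def g_sum2 sum_negf)
  also have "\<dots> = - (mu * g y (Qv w))" by (simp add: K_eq g_simps)
  finally show ?thesis .
qed

lemma T6: "TR (\<lambda>x. br y (J w x)) = 0"
proof (rule TR_zero_lemma[OF _ P_lin Q_lin])
  show "linear (\<lambda>x. br y (J w x))" using linear_compose[OF J_lin2 lin_br] by (simp add: o_def)
  fix x
  show "br y (J w x) = Pz (br y (J w (Qv x)))" by (simp add: P_br J_Q2[of w x])
  show "Qv (Pz x) = 0" by (rule QP)
qed

lemma T7: "TR (\<lambda>x. J y (J x w)) = 0"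
proof (rule TR_zero_lemma[OF _ Q_lin P_lin])
  show "linear (\<lambda>x. J y (J x w))" using linear_compose[OF J_lin1 J_lin2] by (simp add: o_def)
  fix x
  show "J y (J x w) = Qv (J y (J (Pz x) w))" by (simp add: Q_J J_P1[of x w])
  show "Pz (Qv x) = 0" by (rule PQ)
qed

lemma T8: "TR (\<lambda>x. J y (J w x)) = g (Pz y) (Pz w) * TR Qv"
proof -
  have c: "TR (\<lambda>x. J y (J w x)) = TR (\<lambda>x. J w (J y x))"
    by (rule TR_cyc[OF J_lin2 J_lin2])
  have "TR (\<lambda>x. J y (J w x)) + TR (\<lambda>x. J w (J y x)) = TR (\<lambda>x. J y (J w x) + J w (J y x))"
    by (simp add: TR_add)
  also have "\<dots> = TR (\<lambda>x. (2 * g (Pz y) (Pz w)) *\<^sub>R Qv x)" by (simp add: polar_gen)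
  also have "\<dots> = (2 * g (Pz y) (Pz w)) * TR Qv" by (rule TR_scale)
  finally show ?thesis using c by simp
qed

lemma LC2: "LC br g y (LC br g x w) = (1/4) *\<^sub>R (J y (J x w) + J y (J w x)
   - br y (J x w) - br y (J w x) - J (br x w) y)"
  by (simp add: LC_eq br_simps J_simps Z_br2[OF br_Z] J_Z2[OF br_Z] J_V1[OF J_in_V] algebra_simps)

lemma LC3: "LC br g (br x y) w = (- 1/2) *\<^sub>R J (br x y) w"
  by (simp add: LC_eq Z_br[OF br_Z] J_Z2[OF br_Z])

end


context ctx begin

lemma ric_eq: "ricci_tensor br g y w = (mu / 2) * g (Qv y) w - (TR Qv / 4) * g (Pz y) w"
proof -
  have r: "ricci_tensor br g y w = TR (\<lambda>x. LC br g x (LC br g y w)) - TR (\<lambda>x. LC br g y (LC br g x w))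
     - TR (\<lambda>x. LC br g (br x y) w)"
    unfolding ricci_tensor_def curv_def TR_def[symmetric] by (simp add: TR_diff)
  have a: "TR (\<lambda>x. LC br g y (LC br g x w)) = (1/4) * (TR (\<lambda>x. J y (J x w)) + TR (\<lambda>x. J y (J w x))
     - TR (\<lambda>x. br y (J x w)) - TR (\<lambda>x. br y (J w x)) - TR (\<lambda>x. J (br x w) y))"
    unfolding LC2 by (simp add: TR_scale TR_diff TR_add)
  have b: "TR (\<lambda>x. LC br g (br x y) w) = (- 1/2) * TR (\<lambda>x. J (br x y) w)"
    unfolding LC3 by (rule TR_scale)
  have q1: "g y (Qv w) = g (Qv y) w" using gQ1 gQ2 by simp
  have q2: "g (Qv w) y = g (Qv y) w" using gQ1[of w y] gQ1[of y w] gsym[of "Qv w" "Qv y"] by simp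
  have p1: "g (Pz y) (Pz w) = g (Pz y) w" using gP1 by simp
  show ?thesis
    unfolding r a b T4 T5 T6 T7 T8 T4[of w y] TLC q1 q2 p1
    by (simp add: algebra_simps)
qed

lemma ricci_op_eq: "ricci_op br g y = (mu / 2) *\<^sub>R Qv y - (TR Qv / 4) *\<^sub>R Pz y"
proof -
  let ?u = "(mu / 2) *\<^sub>R Qv y - (TR Qv / 4) *\<^sub>R Pz y"
  have P0: "\<forall>w. g ?u w = ricci_tensor br g y w" by (simp add: ric_eq g_simps)
  have U: "\<exists>!u. \<forall>w. g u w = ricci_tensor br g y w"
  proof (rule ex1I[of _ ?u])
    show "\<forall>w. g ?u w = ricci_tensor br g y w" by (rule P0)
    fix u assume "\<forall>w. g u w = ricci_tensor br g y w"
    then show "u = ?u" using P0 by (intro g_eq) simp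
  qed
  have T0: "\<forall>w. g (ricci_op br g y) w = ricci_tensor br g y w"
    unfolding ricci_op_def by (rule theI'[OF U])
  show ?thesis
    apply (rule g_eq)
    subgoal for w using spec[OF T0, of w] spec[OF P0, of w] by simp
    done
qed

lemma main:
  "\<exists>c D. derivation br D \<and> (\<forall>x. ricci_op br g x = c *\<^sub>R x + D x)"
proof -
  define al where "al = mu / 2"
  define be where "be = - (TR Qv / 4)"
  define D where "D x = (be - al) *\<^sub>R (Qv x + Pz x + Pz x)" for x
  have lD: "linear D" unfolding D_def
    by (rule linearI) (simp_all add: linear_add[OF Q_lin] linear_add[OF P_lin]
        linear_scale[OF Q_lin] linear_scale[OF P_lin] algebra_simps)
  have Qbr: "Qv (br x y) = 0" for x y by (simp add: Qv_def P_br)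
  have brQ1: "br (Qv x) y = br x y" for x y by (simp add: Qv_def br_simps Z_br[OF P_Z])
  have brQ2: "br x (Qv y) = br x y" for x y by (simp add: Qv_def br_simps Z_br2[OF P_Z])
  have der: "derivation br D"
    unfolding derivation_def
  proof (intro conjI allI lD)
    fix x y
    have 1: "D (br x y) = (be - al) *\<^sub>R (br x y + br x y)" by (simp add: D_def Qbr P_br)
    have 2: "br (D x) y = (be - al) *\<^sub>R br x y"
      by (simp only: D_def bilinear_ladd[OF blbr] bilinear_lmul[OF blbr] brQ1 Z_br[OF P_Z] add_0_right)
    have 3: "br x (D y) = (be - al) *\<^sub>R br x y"
      by (simp only: D_def bilinear_radd[OF blbr] bilinear_rmul[OF blbr] brQ2 Z_br2[OF P_Z] add_0_right)
    show "D (br x y) = br (D x) y + br x (D y)"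
      unfolding 1 2 3 by (rule scaleR_right_distrib)
  qed
  have "ricci_op br g x = (2 * al - be) *\<^sub>R x + D x" for x
  proof -
    have "x = Pz x + Qv x" by (simp add: PQsum)
    then have "(2 * al - be) *\<^sub>R x + D x = (2 * al - be) *\<^sub>R (Pz x + Qv x) + D x" by simp
    also have "\<dots> = al *\<^sub>R Qv x + be *\<^sub>R Pz x" by (simp add: D_def vec_eq_iff algebra_simps)
    finally show ?thesis by (simp add: ricci_op_eq al_def be_def)
  qed
  then show ?thesis using der by blast
qed

end

theorem mainTheorem1:
  fixes br :: "real^'n \<Rightarrow> real^'n \<Rightarrow> real^'n"
    and g :: "real^'n \<Rightarrow> real^'n \<Rightarrow> real"
  assumes "lie_bracket br"
    and "two_step_nilpotent br"
    and "pseudo_metric g"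
    and "nondegenerate_on g (center br)"
    and "pseudoH_type br g"
  shows "\<exists>c D. derivation br D \<and> (\<forall>x. ricci_op br g x = c *\<^sub>R x + D x)"
proof -
  interpret ctx br g using assms by (unfold_locales)
  show ?thesis by (rule main)
qed


end
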